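(* Let $R$ be a finite group and let $\varphi$ be an automorphism of $R$ with $|R:C_R(\varphi)|=2$. Then one of the following holds: (1) $\frac14\left(|R|+|\mathbf{I}(R)|+|C_R(\varphi)|+|C_R(\varphi)^{-1}|\right)\le \mathbf{c}(R)-\frac{|R|}{32}$; (2) $A:=C_R(\varphi)$ is abelian of exponent greater than $2$, and there is $x\in R\setminus A$ with $x^2$ an involution of $A$ and $xax^{-1}=a^{-1}$ for all $a\in A$ (so $R=\langle A,x\rangle\cong \mathrm{Dic}(A,x^2,x)$ is generalized dicyclic over $A$), and $\varphi=\bar\iota_A$; (3) $R$ is abelian of exponent greater than $2$ and $\varphi=\iota$.
   Context: $\mathbf{I}(R)=\{x\in R\mid x^2=1\}$, $\mathbf{c}(R)=(|R|+|\mathbf{I}(R)|)/2$. For an automorphism $\varphi$: $C_R(\varphi)=\{x\in R\mid x^\varphi=x\}$ and $C_R(\varphi)^{-1}=\{x\in R\mid x^\varphi=x^{-1}\}$. $\iota:R\to R$ is the map $x\mapsto x^{-1}$. Generalized dicyclic: for $A$ abelian of even order and exponent $>2$ and $y$ an involution of $A$, $\mathrm{Dic}(A,y,x)=\langle A,x\mid x^2=y,\ x^{-1}ax=a^{-1}\ \forall a\in A\rangle$. For such a group, $\bar\iota_A$ is the automorphism with $a^{\bar\iota_A}=a$ and $(ax)^{\bar\iota_A}=ax^{-1}$ for all $a\in A$. *)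

theory Defs
  imports Complex_Main "HOL-Algebra.Group"
begin

definition invol_set :: "('a, 'b) monoid_scheme \<Rightarrow> 'a set" where
  "invol_set G = {x \<in> carrier G. x \<otimes>\<^bsub>G\<^esub> x = \<one>\<^bsub>G\<^esub>}"

definition c_num :: "('a, 'b) monoid_scheme \<Rightarrow> real" where
  "c_num G = (real (card (carrier G)) + real (card (invol_set G))) / 2"

definition fixset :: "('a, 'b) monoid_scheme \<Rightarrow> ('a \<Rightarrow> 'a) \<Rightarrow> 'a set" where
  "fixset G f = {x \<in> carrier G. f x = x}"

definition invset :: "('a, 'b) monoid_scheme \<Rightarrow> ('a \<Rightarrow> 'a) \<Rightarrow> 'a set" where
  "invset G f = {x \<in> carrier G. f x = inv\<^bsub>G\<^esub> x}"

definition set_exponent :: "('a, 'b) monoid_scheme \<Rightarrow> 'a set \<Rightarrow> nat" where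
  "set_exponent G A =
     (if \<exists>n::nat>0. \<forall>a\<in>A. a [^]\<^bsub>G\<^esub> n = \<one>\<^bsub>G\<^esub>
      then (LEAST n::nat. n > 0 \<and> (\<forall>a\<in>A. a [^]\<^bsub>G\<^esub> n = \<one>\<^bsub>G\<^esub>)) else 0)"

definition is_involution :: "('a, 'b) monoid_scheme \<Rightarrow> 'a \<Rightarrow> bool" where
  "is_involution G y \<longleftrightarrow> y \<in> carrier G \<and> y \<noteq> \<one>\<^bsub>G\<^esub> \<and> y \<otimes>\<^bsub>G\<^esub> y = \<one>\<^bsub>G\<^esub>"

end

theory Submission
  imports Defs "HOL-Algebra.Multiplicative_Group"
begin

lemma (in group) big_closed:
  assumes sg: "subgroup A G" and fin: "finite A" and HA: "H \<subseteq> A"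
    and cl: "\<And>x y. x \<in> H \<Longrightarrow> y \<in> H \<Longrightarrow> x \<otimes> y \<in> H"
    and cd: "card A < 2 * card H"
  shows "H = A"
proof
  show "A \<subseteq> H"
  proof
    fix g assume g: "g \<in> A"
    have Acar: "A \<subseteq> carrier G" using sg subgroup.subset by blast
    let ?K = "(\<lambda>h. g \<otimes> inv h) ` H"
    have inj: "inj_on (\<lambda>h. g \<otimes> inv h) H"
    proof (rule inj_onI)
      fix x y assume "x \<in> H" "y \<in> H" "g \<otimes> inv x = g \<otimes> inv y"
      then show "x = y" using HA Acar g
        by (metis (no_types, lifting) inv_inv Units_eq Units_l_cancel inv_closed subsetD)
    qed
    have KA: "?K \<subseteq> A" using HA g sg by (auto intro!: subgroup.m_closed subgroup.m_inv_closed)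
    have cK: "card ?K = card H" using card_image[OF inj] .
    have "H \<inter> ?K \<noteq> {}"
    proof
      assume e: "H \<inter> ?K = {}"
      have "card (H \<union> ?K) = card H + card ?K"
        using card_Un_disjoint[OF finite_subset[OF HA fin] finite_subset[OF KA fin] e] .
      moreover have "card (H \<union> ?K) \<le> card A" using HA KA fin by (intro card_mono) auto
      ultimately show False using cd cK by linarith
    qed
    then obtain h1 h2 where h1: "h1 \<in> H" and h2: "h2 \<in> H" and e: "h1 = g \<otimes> inv h2" by blast
    have "g = h1 \<otimes> h2" using e h2 HA Acar g by (simp add: m_assoc subsetD)
    then show "g \<in> H" using cl h1 h2 by simp
  qed
qed (rule HA)

lemma (in group) exp_gt2:
  assumes fin: "finite (carrier G)" and A: "A \<subseteq> carrier G" and a: "a \<in> A" and aa: "a \<otimes> a \<noteq> \<one>"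
  shows "set_exponent G A > 2"
proof -
  have ex: "\<exists>n::nat>0. \<forall>a\<in>A. a [^] n = \<one>"
    using fin A order_gt_0_iff_finite pow_order_eq_1 by blast
  let ?P = "\<lambda>n::nat. n > 0 \<and> (\<forall>a\<in>A. a [^] n = \<one>)"
  have P: "?P (LEAST n. ?P n)" using LeastI_ex[of ?P] ex by blast
  have ac: "a \<in> carrier G" using a A by auto
  have "(LEAST n. ?P n) \<noteq> 1"
  proof
    assume "(LEAST n. ?P n) = 1"
    then have "a [^] (1::nat) = \<one>" using P a by metis
    then show False using aa ac by simp
  qed
  moreover have "(LEAST n. ?P n) \<noteq> 2"
  proof
    assume "(LEAST n. ?P n) = 2"
    then have "a [^] (2::nat) = \<one>" using P a by metis
    then show False using aa ac by (simp add: numeral_2_eq_2)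
  qed
  ultimately show ?thesis using P ex unfolding set_exponent_def by auto
qed

lemma (in group) alpha_mult:
  assumes "x \<in> carrier G" "a \<in> carrier G" "b \<in> carrier G"
  shows "x \<otimes> (a \<otimes> b) \<otimes> inv x = (x \<otimes> a \<otimes> inv x) \<otimes> (x \<otimes> b \<otimes> inv x)"
  using assms by (simp add: m_assoc flip: m_assoc[of "inv x" x])

lemma (in group) main:
  assumes fin: "finite (carrier G)"
    and iso: "\<phi> \<in> iso G G"
    and cardA: "card (carrier G) = 2 * card (fixset G \<phi>)"
  shows "(1/4) * (real (card (carrier G)) + real (card (invol_set G))
            + real (card (fixset G \<phi>)) + real (card (invset G \<phi>)))
           \<le> c_num G - real (card (carrier G)) / 32
       \<or> (let A = fixset G \<phi> in
            comm_group (G\<lparr>carrier := A\<rparr>) \<and> set_exponent G A > 2 \<and>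
            (\<exists>x \<in> carrier G - A.
               x \<otimes> x \<in> A \<and> is_involution G (x \<otimes> x) \<and>
               (\<forall>a\<in>A. x \<otimes> a \<otimes> inv x = inv a) \<and>
               (\<forall>a\<in>A. \<phi> a = a \<and> \<phi> (a \<otimes> x) = a \<otimes> inv x)))
       \<or> (comm_group G \<and> set_exponent G (carrier G) > 2 \<and>
            (\<forall>g\<in>carrier G. \<phi> g = inv g))"
proof (cases "(1/4) * (real (card (carrier G)) + real (card (invol_set G))
            + real (card (fixset G \<phi>)) + real (card (invset G \<phi>)))
           \<le> c_num G - real (card (carrier G)) / 32")
  case True then show ?thesis by blast
next
  case False
  define A where "A = fixset G \<phi>"
  define B where "B = carrier G - A"
  define I where "I = invol_set G"
  define J where "J = invset G \<phi>"
  define X where "X = J - A"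
  define m where "m = card A"
  have hom: "\<phi> \<in> hom G G" using iso by (simp add: iso_def)
  have gh: "group_hom G G \<phi>" using hom by (simp add: group_hom_def group_hom_axioms_def is_group)
  have phm: "\<And>x y. x \<in> carrier G \<Longrightarrow> y \<in> carrier G \<Longrightarrow> \<phi> (x \<otimes> y) = \<phi> x \<otimes> \<phi> y"
    using hom by (simp add: hom_mult)
  have phc: "\<And>x. x \<in> carrier G \<Longrightarrow> \<phi> x \<in> carrier G" using hom by (simp add: hom_in_carrier)
  have phi: "\<And>x. x \<in> carrier G \<Longrightarrow> \<phi> (inv x) = inv (\<phi> x)" using group_hom.hom_inv[OF gh] by simp
  have ph1: "\<phi> \<one> = \<one>" using group_hom.hom_one[OF gh] .
  have Acar: "A \<subseteq> carrier G" by (auto simp: A_def fixset_def)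
  have sgA: "subgroup A G"
  proof (rule subgroupI)
    show "A \<subseteq> carrier G" by (rule Acar)
    show "A \<noteq> {}" using ph1 by (auto simp: A_def fixset_def)
    show "\<And>a. a \<in> A \<Longrightarrow> inv a \<in> A" using phi by (auto simp: A_def fixset_def)
    show "\<And>a b. a \<in> A \<Longrightarrow> b \<in> A \<Longrightarrow> a \<otimes> b \<in> A" using phm by (auto simp: A_def fixset_def)
  qed
  have finA: "finite A" using fin Acar finite_subset by blast
  have finB: "finite B" using fin B_def by auto
  have cardG: "card (carrier G) = 2 * m" using cardA by (simp add: A_def m_def)
  have cardB: "card B = m" unfolding B_def using card_Diff_subset[OF finA Acar] cardG m_def by simp
  have Jcar: "J \<subseteq> carrier G" by (auto simp: J_def invset_def)
  have Icar: "I \<subseteq> carrier G" by (auto simp: I_def invol_set_def)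
  have finJ: "finite J" using fin Jcar finite_subset by blast
  have finI: "finite I" using fin Icar finite_subset by blast
  have JA: "J \<inter> A \<subseteq> I \<inter> A"
  proof
    fix a assume a: "a \<in> J \<inter> A"
    then have "a \<in> carrier G" "\<phi> a = a" "\<phi> a = inv a" by (auto simp: J_def A_def invset_def fixset_def)
    then have "a \<otimes> a = \<one>" by (metis r_inv)
    then show "a \<in> I \<inter> A" using a \<open>a \<in> carrier G\<close> by (auto simp: I_def invol_set_def)
  qed
  have cJ: "card J = card (J \<inter> A) + card X" unfolding X_def using card_Int_Diff[OF finJ] by simp
  have cI: "card I = card (I \<inter> A) + card (I - A)" using card_Int_Diff[OF finI] by simp
  have cJA: "card (J \<inter> A) \<le> card (I \<inter> A)" using JA finI by (intro card_mono) auto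
  have F: "\<not> 4 * real (card J) \<le> 3 * real m + 4 * real (card I)"
  proof
    assume "4 * real (card J) \<le> 3 * real m + 4 * real (card I)"
    then have "(1/4) * (real (card (carrier G)) + real (card (invol_set G))
            + real (card (fixset G \<phi>)) + real (card (invset G \<phi>)))
           \<le> c_num G - real (card (carrier G)) / 32"
      unfolding c_num_def using cardG by (simp add: I_def J_def A_def[symmetric] m_def[symmetric] field_simps)
    then show False using False by blast
  qed
  have key4: "4 * card X > 3 * m + 4 * card (I - A)"
    using F cJ cI cJA by linarith
  have "X \<noteq> {}" using key4 by auto
  then obtain x0 where x0X: "x0 \<in> X" by blast
  have x0: "x0 \<in> carrier G" "x0 \<notin> A" "\<phi> x0 = inv x0"
    using x0X by (auto simp: X_def J_def invset_def)
  have XB: "X \<subseteq> B" using Jcar by (auto simp: X_def B_def)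
  have inj0: "inj_on (\<lambda>a. a \<otimes> x0) A"
    by (rule inj_onI) (metis x0(1) Acar right_cancel subsetD)
  have imB: "(\<lambda>a. a \<otimes> x0) ` A \<subseteq> B"
  proof
    fix y assume "y \<in> (\<lambda>a. a \<otimes> x0) ` A"
    then obtain a where a: "a \<in> A" "y = a \<otimes> x0" by blast
    have ac: "a \<in> carrier G" using a Acar by auto
    have "y \<notin> A"
    proof
      assume "y \<in> A"
      then have "inv a \<otimes> y \<in> A" using a sgA by (auto intro: subgroup.m_closed subgroup.m_inv_closed)
      moreover have "inv a \<otimes> y = x0" using a ac x0 by (simp add: m_assoc[symmetric])
      ultimately show False using x0 by simp
    qed
    then show "y \<in> B" using a ac x0 by (auto simp: B_def)
  qed
  have Bim: "B = (\<lambda>a. a \<otimes> x0) ` A"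
    using card_subset_eq[OF finB imB] card_image[OF inj0] cardB m_def by simp
  have phx: "\<And>a. a \<in> A \<Longrightarrow> \<phi> (a \<otimes> x0) = a \<otimes> inv x0"
    using x0 Acar phm by (auto simp: A_def fixset_def)
  have keyS: "\<And>a. a \<in> A \<Longrightarrow> (a \<otimes> x0 \<in> X) = (x0 \<otimes> a \<otimes> inv x0 = inv a)"
  proof -
    fix a assume a: "a \<in> A"
    have ac: "a \<in> carrier G" using a Acar by auto
    have "a \<otimes> x0 \<in> B" using a Bim by auto
    then have "(a \<otimes> x0 \<in> X) = (a \<otimes> inv x0 = inv x0 \<otimes> inv a)"
      using phx[OF a] ac x0 by (auto simp: X_def J_def B_def invset_def inv_mult_group)
    also have "\<dots> = (x0 \<otimes> a \<otimes> inv x0 = inv a)"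
    proof
      assume e: "a \<otimes> inv x0 = inv x0 \<otimes> inv a"
      have "x0 \<otimes> a \<otimes> inv x0 = x0 \<otimes> (inv x0 \<otimes> inv a)" using e ac x0 by (simp add: m_assoc)
      then show "x0 \<otimes> a \<otimes> inv x0 = inv a" using ac x0 by (simp add: m_assoc[symmetric])
    next
      assume e: "x0 \<otimes> a \<otimes> inv x0 = inv a"
      have "inv x0 \<otimes> (x0 \<otimes> a \<otimes> inv x0) = inv x0 \<otimes> inv a" using e by simp
      then show "a \<otimes> inv x0 = inv x0 \<otimes> inv a" using ac x0 by (simp add: m_assoc[symmetric])
    qed
    finally show "(a \<otimes> x0 \<in> X) = (x0 \<otimes> a \<otimes> inv x0 = inv a)" .
  qed
  define S where "S = {a \<in> A. x0 \<otimes> a \<otimes> inv x0 = inv a}"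
  have SA: "S \<subseteq> A" by (auto simp: S_def)
  have XS: "X = (\<lambda>a. a \<otimes> x0) ` S"
  proof
    show "X \<subseteq> (\<lambda>a. a \<otimes> x0) ` S"
    proof
      fix y assume y: "y \<in> X"
      then obtain a where a: "a \<in> A" "y = a \<otimes> x0" using XB Bim by blast
      then show "y \<in> (\<lambda>a. a \<otimes> x0) ` S" using keyS y by (auto simp: S_def)
    qed
    show "(\<lambda>a. a \<otimes> x0) ` S \<subseteq> X" using keyS by (auto simp: S_def)
  qed
  have cS: "card S = card X" using XS card_image[OF inj_on_subset[OF inj0 SA]] by simp
  have finS: "finite S" using finA SA finite_subset by blast
  have cSm: "card S \<le> m" using card_mono[OF finA SA] m_def by simp
  have S4: "4 * card S > 3 * m" using key4 cS by linarith
  have Scar: "\<And>a. a \<in> S \<Longrightarrow> a \<in> carrier G" using SA Acar by auto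
  have Sinv: "\<And>a. a \<in> S \<Longrightarrow> x0 \<otimes> a \<otimes> inv x0 = inv a" by (auto simp: S_def)
  have comm1: "\<And>a b. a \<in> S \<Longrightarrow> b \<in> S \<Longrightarrow> a \<otimes> b \<in> S \<Longrightarrow> a \<otimes> b = b \<otimes> a"
  proof -
    fix a b assume a: "a \<in> S" and b: "b \<in> S" and ab: "a \<otimes> b \<in> S"
    have "inv a \<otimes> inv b = x0 \<otimes> (a \<otimes> b) \<otimes> inv x0"
      using alpha_mult[OF x0(1) Scar[OF a] Scar[OF b]] Sinv[OF a] Sinv[OF b] by simp
    also have "\<dots> = inv (a \<otimes> b)" using Sinv[OF ab] .
    also have "\<dots> = inv b \<otimes> inv a" using Scar[OF a] Scar[OF b] by (simp add: inv_mult_group)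
    finally have "inv (inv a \<otimes> inv b) = inv (inv b \<otimes> inv a)" by simp
    then show "a \<otimes> b = b \<otimes> a" using Scar[OF a] Scar[OF b] by (simp add: inv_mult_group)
  qed
  define Z where "Z = {a \<in> A. \<forall>b\<in>A. a \<otimes> b = b \<otimes> a}"
  have SZ: "S \<subseteq> Z"
  proof
    fix a assume a: "a \<in> S"
    define C where "C = {b \<in> A. a \<otimes> b = b \<otimes> a}"
    define S' where "S' = {b \<in> A. a \<otimes> b \<in> S}"
    have ac: "a \<in> carrier G" using Scar[OF a] .
    have aA: "a \<in> A" using a SA by auto
    have S'S: "(\<lambda>b. a \<otimes> b) ` S' = S"
    proof
      show "(\<lambda>b. a \<otimes> b) ` S' \<subseteq> S" by (auto simp: S'_def)
      show "S \<subseteq> (\<lambda>b. a \<otimes> b) ` S'"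
      proof
        fix c assume c: "c \<in> S"
        have cc: "c \<in> carrier G" using Scar[OF c] .
        have "inv a \<otimes> c \<in> A" using aA c SA sgA by (auto intro: subgroup.m_closed subgroup.m_inv_closed)
        moreover have "a \<otimes> (inv a \<otimes> c) = c" using ac cc by (simp add: m_assoc[symmetric])
        ultimately show "c \<in> (\<lambda>b. a \<otimes> b) ` S'" using c unfolding S'_def by (metis (mono_tags, lifting) image_eqI mem_Collect_eq)
      qed
    qed
    have S'A: "S' \<subseteq> A" by (auto simp: S'_def)
    have injS': "inj_on (\<lambda>b. a \<otimes> b) S'"
      by (rule inj_onI) (metis (no_types, lifting) ac Acar S'A Units_eq Units_l_cancel subsetD)
    have cS': "card S' = card S" using card_image[OF injS'] S'S by simp
    have "card (S \<union> S') + card (S \<inter> S') = card S + card S'"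
      using card_Un_Int[OF finS finite_subset[OF S'A finA]] by simp
    moreover have "card (S \<union> S') \<le> m" using SA S'A finA m_def card_mono[of A "S \<union> S'"] by auto
    ultimately have cT: "2 * card (S \<inter> S') > m" using cS' S4 by linarith
    have TC: "S \<inter> S' \<subseteq> C" using comm1 a SA by (auto simp: S'_def C_def)
    have CA: "C \<subseteq> A" by (auto simp: C_def)
    have "card (S \<inter> S') \<le> card C" using TC finite_subset[OF CA finA] by (intro card_mono)
    then have "card A < 2 * card C" using cT m_def by linarith
    moreover have "\<And>x y. x \<in> C \<Longrightarrow> y \<in> C \<Longrightarrow> x \<otimes> y \<in> C"
    proof -
      fix x y assume x: "x \<in> C" and y: "y \<in> C"
      have xc: "x \<in> carrier G" and yc: "y \<in> carrier G" using x y Acar by (auto simp: C_def)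
      have "a \<otimes> (x \<otimes> y) = (a \<otimes> x) \<otimes> y" using ac xc yc by (simp add: m_assoc)
      also have "\<dots> = x \<otimes> (a \<otimes> y)" using x ac xc yc by (simp add: C_def m_assoc)
      also have "\<dots> = (x \<otimes> y) \<otimes> a" using y ac xc yc by (simp add: C_def m_assoc)
      finally show "x \<otimes> y \<in> C" using x y sgA by (auto simp: C_def intro: subgroup.m_closed)
    qed
    ultimately have "C = A" using big_closed[OF sgA finA CA] by blast
    then show "a \<in> Z" using aA by (auto simp: Z_def C_def)
  qed
  have ZA: "Z \<subseteq> A" by (auto simp: Z_def)
  have "Z = A"
  proof (rule big_closed[OF sgA finA ZA])
    fix x y assume x: "x \<in> Z" and y: "y \<in> Z"
    have xc: "x \<in> carrier G" and yc: "y \<in> carrier G" using x y Acar unfolding Z_def by blast+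
    show "x \<otimes> y \<in> Z" unfolding Z_def
    proof (safe)
      have "x \<in> A" "y \<in> A" using x y unfolding Z_def by blast+
      then show "x \<otimes> y \<in> A" using sgA by (blast intro: subgroup.m_closed)
      fix b assume b: "b \<in> A"
      have bc: "b \<in> carrier G" using b Acar by auto
      have yb: "y \<otimes> b = b \<otimes> y" using y b by (simp add: Z_def)
      have xb: "x \<otimes> b = b \<otimes> x" using x b by (simp add: Z_def)
      have "x \<otimes> y \<otimes> b = x \<otimes> (b \<otimes> y)" using yb xc yc bc by (simp add: m_assoc)
      also have "\<dots> = b \<otimes> (x \<otimes> y)" using xb xc yc bc by (simp add: m_assoc[symmetric])
      finally show "x \<otimes> y \<otimes> b = b \<otimes> (x \<otimes> y)" .
    qed
  next
    show "card A < 2 * card Z" using card_mono[OF finite_subset[OF ZA finA] SZ] S4 m_def by linarith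
  qed
  then have Acomm: "\<And>a b. a \<in> A \<Longrightarrow> b \<in> A \<Longrightarrow> a \<otimes> b = b \<otimes> a" unfolding Z_def by blast
  have "S = A"
  proof (rule big_closed[OF sgA finA SA])
    fix a b assume a: "a \<in> S" and b: "b \<in> S"
    have "x0 \<otimes> (a \<otimes> b) \<otimes> inv x0 = inv a \<otimes> inv b"
      using alpha_mult[OF x0(1) Scar[OF a] Scar[OF b]] Sinv[OF a] Sinv[OF b] by simp
    also have "\<dots> = inv b \<otimes> inv a" using a b SA sgA by (intro Acomm) (auto intro: subgroup.m_inv_closed)
    also have "\<dots> = inv (a \<otimes> b)" using Scar[OF a] Scar[OF b] by (simp add: inv_mult_group)
    finally show "a \<otimes> b \<in> S" using a b sgA by (auto simp: S_def intro: subgroup.m_closed)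
  next
    show "card A < 2 * card S" using S4 m_def cSm by linarith
  qed
  then have Ainv: "\<And>a. a \<in> A \<Longrightarrow> x0 \<otimes> a \<otimes> inv x0 = inv a" by (auto simp: S_def)
  have xa: "\<And>a. a \<in> A \<Longrightarrow> x0 \<otimes> a = inv a \<otimes> x0"
  proof -
    fix a assume a: "a \<in> A"
    have ac: "a \<in> carrier G" using a Acar by auto
    have "x0 \<otimes> a = (x0 \<otimes> a \<otimes> inv x0) \<otimes> x0" using ac x0 by (simp add: m_assoc)
    then show "x0 \<otimes> a = inv a \<otimes> x0" using Ainv[OF a] by simp
  qed
  have x2A: "x0 \<otimes> x0 \<in> A"
  proof (rule ccontr)
    assume "x0 \<otimes> x0 \<notin> A"
    then have "x0 \<otimes> x0 \<in> B" using x0 by (auto simp: B_def)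
    then obtain a where a: "a \<in> A" "x0 \<otimes> x0 = a \<otimes> x0" using Bim by blast
    then have "x0 = a" using x0 Acar by (metis right_cancel subsetD)
    then show False using a x0 by simp
  qed
  have sqB: "\<And>b. b \<in> B \<Longrightarrow> b \<otimes> b = x0 \<otimes> x0"
  proof -
    fix b assume "b \<in> B"
    then obtain a where a: "a \<in> A" "b = a \<otimes> x0" using Bim by blast
    have ac: "a \<in> carrier G" using a Acar by auto
    have "b \<otimes> b = a \<otimes> (x0 \<otimes> a) \<otimes> x0" using a ac x0 by (simp add: m_assoc)
    also have "\<dots> = x0 \<otimes> x0" using xa[OF a(1)] ac x0 by (simp add: m_assoc[symmetric])
    finally show "b \<otimes> b = x0 \<otimes> x0" .
  qed
  have x2: "x0 \<otimes> x0 \<noteq> \<one>"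
  proof
    assume e: "x0 \<otimes> x0 = \<one>"
    have "B \<subseteq> I - A" using sqB e by (auto simp: B_def I_def invol_set_def)
    then have "m \<le> card (I - A)" using cardB card_mono[of "I - A" B] finI by auto
    moreover have "card X \<le> m" using card_mono[OF finB XB] cardB by simp
    ultimately show False using key4 by linarith
  qed
  have "(x0 \<otimes> x0) \<otimes> x0 = inv (x0 \<otimes> x0) \<otimes> x0"
    using xa[OF x2A] x0 by (simp add: m_assoc)
  then have "x0 \<otimes> x0 = inv (x0 \<otimes> x0)" using x0 by (metis right_cancel m_closed inv_closed)
  then have "(x0 \<otimes> x0) \<otimes> (x0 \<otimes> x0) = \<one>" using x0 by (metis r_inv m_closed)
  then have x0inv: "is_involution G (x0 \<otimes> x0)" using x2 x0 by (simp add: is_involution_def)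
  have carAB: "\<And>g. g \<in> carrier G \<Longrightarrow> g \<in> A \<or> (\<exists>a\<in>A. g = a \<otimes> x0)"
    using Bim B_def by blast
  show ?thesis
  proof (cases "\<exists>a\<in>A. a \<otimes> a \<noteq> \<one>")
    case True
    then obtain a where a: "a \<in> A" "a \<otimes> a \<noteq> \<one>" by blast
    have cg: "comm_group (G\<lparr>carrier := A\<rparr>)"
    proof -
      interpret H: group "G\<lparr>carrier := A\<rparr>" using subgroup.subgroup_is_group[OF sgA is_group] .
      show ?thesis by (rule H.group_comm_groupI) (simp add: Acomm)
    qed
    have "set_exponent G A > 2" using exp_gt2[OF fin Acar a] .
    moreover have "\<forall>a\<in>A. \<phi> a = a \<and> \<phi> (a \<otimes> x0) = a \<otimes> inv x0"
      using phx by (auto simp: A_def fixset_def)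
    ultimately have "let A = fixset G \<phi> in
            comm_group (G\<lparr>carrier := A\<rparr>) \<and> set_exponent G A > 2 \<and>
            (\<exists>x \<in> carrier G - A.
               x \<otimes> x \<in> A \<and> is_involution G (x \<otimes> x) \<and>
               (\<forall>a\<in>A. x \<otimes> a \<otimes> inv x = inv a) \<and>
               (\<forall>a\<in>A. \<phi> a = a \<and> \<phi> (a \<otimes> x) = a \<otimes> inv x))"
      using cg x0 x2A x0inv Ainv unfolding A_def[symmetric] Let_def by blast
    then show ?thesis by blast
  next
    case False
    then have aa: "\<And>a. a \<in> A \<Longrightarrow> a \<otimes> a = \<one>" by blast
    have ainv: "\<And>a. a \<in> A \<Longrightarrow> inv a = a"
      using aa Acar by (metis inv_equality subsetD)
    have xc: "\<And>a. a \<in> A \<Longrightarrow> x0 \<otimes> a = a \<otimes> x0" using xa ainv by simp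
    have comm: "\<And>g h. g \<in> carrier G \<Longrightarrow> h \<in> carrier G \<Longrightarrow> g \<otimes> h = h \<otimes> g"
    proof -
      fix g h assume g: "g \<in> carrier G" and h: "h \<in> carrier G"
      have c1: "\<And>a b. a \<in> A \<Longrightarrow> b \<in> A \<Longrightarrow> a \<otimes> (b \<otimes> x0) = (b \<otimes> x0) \<otimes> a"
      proof -
        fix a b assume a: "a \<in> A" and b: "b \<in> A"
        have ac: "a \<in> carrier G" and bc: "b \<in> carrier G" using a b Acar by auto
        have "a \<otimes> (b \<otimes> x0) = b \<otimes> (a \<otimes> x0)" using Acomm[OF a b] ac bc x0 by (simp add: m_assoc[symmetric])
        also have "\<dots> = (b \<otimes> x0) \<otimes> a" using xc[OF a] ac bc x0 by (simp add: m_assoc)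
        finally show "a \<otimes> (b \<otimes> x0) = (b \<otimes> x0) \<otimes> a" .
      qed
      have c2: "\<And>a b. a \<in> A \<Longrightarrow> b \<in> A \<Longrightarrow> (a \<otimes> x0) \<otimes> (b \<otimes> x0) = (b \<otimes> x0) \<otimes> (a \<otimes> x0)"
      proof -
        fix a b assume a: "a \<in> A" and b: "b \<in> A"
        have ac: "a \<in> carrier G" and bc: "b \<in> carrier G" using a b Acar by auto
        have "(a \<otimes> x0) \<otimes> (b \<otimes> x0) = a \<otimes> (x0 \<otimes> b) \<otimes> x0" using ac bc x0 by (simp add: m_assoc)
        also have "\<dots> = (a \<otimes> b) \<otimes> x0 \<otimes> x0" using xc[OF b] ac bc x0 by (simp add: m_assoc)
        also have "\<dots> = (b \<otimes> a) \<otimes> x0 \<otimes> x0" using Acomm[OF a b] by simp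
        also have "\<dots> = b \<otimes> (x0 \<otimes> a) \<otimes> x0" using xc[OF a] ac bc x0 by (simp add: m_assoc)
        also have "\<dots> = (b \<otimes> x0) \<otimes> (a \<otimes> x0)" using ac bc x0 by (simp add: m_assoc)
        finally show "(a \<otimes> x0) \<otimes> (b \<otimes> x0) = (b \<otimes> x0) \<otimes> (a \<otimes> x0)" .
      qed
      show "g \<otimes> h = h \<otimes> g"
        using carAB[OF g] carAB[OF h] Acomm c1 c2 by metis
    qed
    have "comm_group G" by (rule group_comm_groupI) (rule comm)
    moreover have "set_exponent G (carrier G) > 2" using exp_gt2[OF fin subset_refl x0(1) x2] .
    moreover have "\<forall>g\<in>carrier G. \<phi> g = inv g"
    proof
      fix g assume g: "g \<in> carrier G"
      show "\<phi> g = inv g"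
      proof (cases "g \<in> A")
        case True then show ?thesis using ainv by (simp add: A_def fixset_def)
      next
        case False
        then obtain a where a: "a \<in> A" "g = a \<otimes> x0" using carAB[OF g] by blast
        have ac: "a \<in> carrier G" using a Acar by auto
        have "\<phi> g = a \<otimes> inv x0" using phx a by simp
        also have "\<dots> = inv x0 \<otimes> inv a" using comm ac x0 ainv[OF a(1)] by simp
        also have "\<dots> = inv g" using a ac x0 by (simp add: inv_mult_group)
        finally show ?thesis .
      qed
    qed
    ultimately show ?thesis by blast
  qed
qed

theorem lemma2p2:
  fixes R :: "('a, 'b) monoid_scheme" and \<phi> :: "'a \<Rightarrow> 'a"
  assumes "group R" and "finite (carrier R)"
    and "\<phi> \<in> iso R R"
    and "card (carrier R) = 2 * card (fixset R \<phi>)"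
  shows "(1/4) * (real (card (carrier R)) + real (card (invol_set R))
            + real (card (fixset R \<phi>)) + real (card (invset R \<phi>)))
           \<le> c_num R - real (card (carrier R)) / 32
       \<or> (let A = fixset R \<phi> in
            comm_group (R\<lparr>carrier := A\<rparr>) \<and> set_exponent R A > 2 \<and>
            (\<exists>x \<in> carrier R - A.
               x \<otimes>\<^bsub>R\<^esub> x \<in> A \<and> is_involution R (x \<otimes>\<^bsub>R\<^esub> x) \<and>
               (\<forall>a\<in>A. x \<otimes>\<^bsub>R\<^esub> a \<otimes>\<^bsub>R\<^esub> inv\<^bsub>R\<^esub> x = inv\<^bsub>R\<^esub> a) \<and>
               (\<forall>a\<in>A. \<phi> a = a \<and> \<phi> (a \<otimes>\<^bsub>R\<^esub> x) = a \<otimes>\<^bsub>R\<^esub> inv\<^bsub>R\<^esub> x)))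
       \<or> (comm_group R \<and> set_exponent R (carrier R) > 2 \<and>
            (\<forall>g\<in>carrier R. \<phi> g = inv\<^bsub>R\<^esub> g))"
  using group.main[OF assms(1) assms(2) assms(3) assms(4)] .

end
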